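(* Let $V=E_1\oplus E_2$ be a decomposition with $E_1,E_2\neq\{0\}$, and let $\Omega_i\subset\mathbb{P}(E_i)$ ($i=1,2$) be properly convex domains. Let $\Omega$ be a join of $\Omega_1$ and $\Omega_2$. If $P\subset\Omega$ is a convex subset with nonempty interior such that $\Omega_1\cap\overline{P}$ has nonempty relative interior in $\Omega_1$, then $\mu_\Omega(P)=\infty$.
   Context: A properly convex domain of $\mathbb{P}(E)$ is an open subset that is the projectivization of an open convex cone of $E$ containing no full line. If $C_i\subset E_i$ are open convex cones lifting $\Omega_i$ with no full line, a join of $\Omega_1$ and $\Omega_2$ is a properly convex domain of $\mathbb{P}(E_1\oplus E_2)$ of the form $\mathbb{P}(C_1+C_2)$ (there are two such, according to the choice of signs of the lifts). $\mu_\Omega$ is the Busemann measure of $\Omega$, i.e. the $d$-dimensional Hausdorff measure of $(\Omega,d_\Omega)$ where $d=\dim\mathbb{P}(V)$ and $d_\Omega(x,y)=\tfrac12\log[x':x:y:y']$ is the Hilbert metric ($x',y'$ the endpoints in $\partial\Omega$ of the line through $x,y$, cross-ratio normalized by $[0:1:\lambda:\infty]=\lambda$). *)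

theory Defs
  imports "HOL-Analysis.Analysis"
begin

(* Conventions (see NOTES.md).  A subset of the projective space P(V) is represented by
   a lift in V.  A properly convex domain P(C) is represented by an open convex cone C
   (closed under positive scaling) containing no full affine line. *)

definition proper_convex_cone :: "'a::real_normed_vector set \<Rightarrow> bool" where
  "proper_convex_cone C \<longleftrightarrow> open C \<and> convex C \<and> C \<noteq> {} \<and>
     (\<forall>x\<in>C. \<forall>t>0. t *\<^sub>R x \<in> C) \<and>
     \<not> (\<exists>p v. v \<noteq> 0 \<and> (\<forall>t::real. p + t *\<^sub>R v \<in> C))"

(* full preimage in V - {0} of P(K) *)
definition proj_lift :: "'a::real_vector set \<Rightarrow> 'a set" where
  "proj_lift K = K \<union> uminus ` K"

(* C1 + C2 inside E1 \<oplus> E2 = 'a \<times> 'b *)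
definition join_cone :: "'a::real_vector set \<Rightarrow> 'b::real_vector set \<Rightarrow> ('a \<times> 'b) set" where
  "join_cone C1 C2 = {(u, 0) + (0, w) | u w. u \<in> C1 \<and> w \<in> C2}"

(* cross ratio of four points of a projective line, given by homogeneous coordinates
   in R^2; normalized so that [0:1:lambda:infinity] = lambda *)
definition det2 :: "real \<times> real \<Rightarrow> real \<times> real \<Rightarrow> real" where
  "det2 p q = fst p * snd q - snd p * fst q"

definition cross_ratio :: "real \<times> real \<Rightarrow> real \<times> real \<Rightarrow> real \<times> real \<Rightarrow> real \<times> real \<Rightarrow> real" where
  "cross_ratio a b c d = (det2 a c * det2 b d) / (det2 a b * det2 c d)"

(* x - (hilbert_param C x y) y is the endpoint x' in the boundary of the line through x, y *)
definition hilbert_param :: "'a::real_vector set \<Rightarrow> 'a \<Rightarrow> 'a \<Rightarrow> real" where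
  "hilbert_param C x y = Sup {t. 0 \<le> t \<and> x - t *\<^sub>R y \<in> C}"

(* Hilbert metric d_Omega([x],[y]) = 1/2 log [x':x:y:y'] for lifts x, y in C, with
   x' = x - a y, y' = y - b x; the point s x + t y has homogeneous coordinates (s,t). *)
definition hilbert_dist :: "'a::real_vector set \<Rightarrow> 'a \<Rightarrow> 'a \<Rightarrow> real" where
  "hilbert_dist C x y =
     (let a = hilbert_param C x y; b = hilbert_param C y x
      in ln (cross_ratio (1, - a) (1, 0) (0, 1) (- b, 1)) / 2)"

definition set_diam :: "('a \<Rightarrow> 'a \<Rightarrow> real) \<Rightarrow> 'a set \<Rightarrow> real" where
  "set_diam \<delta> U = (if U = {} then 0 else Sup {\<delta> x y | x y. x \<in> U \<and> y \<in> U})"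

(* d-dimensional Hausdorff measure of A in the (pseudo)metric space (S, delta),
   normalized by the volume of the Euclidean unit d-ball *)
definition hausdorff_measure :: "nat \<Rightarrow> 'a set \<Rightarrow> ('a \<Rightarrow> 'a \<Rightarrow> real) \<Rightarrow> 'a set \<Rightarrow> ennreal" where
  "hausdorff_measure d S \<delta> A =
     (SUP \<epsilon>\<in>{0::real<..}. INF U\<in>{U :: nat \<Rightarrow> 'a set. A \<subseteq> (\<Union>i. U i) \<and>
          (\<forall>i. U i \<subseteq> S \<and> (\<forall>x\<in>U i. \<forall>y\<in>U i. \<delta> x y \<le> \<epsilon>))}.
        (\<Sum>i. ennreal (unit_ball_vol (real d) * (set_diam \<delta> (U i) / 2) ^ d)))"

(* Busemann measure of P(C) (d = dim P(V) = dim V - 1), on lifts A \<subseteq> C *)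
definition busemann :: "'a::euclidean_space set \<Rightarrow> 'a set \<Rightarrow> ennreal" where
  "busemann C A = hausdorff_measure (DIM('a) - 1) C (hilbert_dist C) A"

end

theory Submission
  imports Defs
begin


lemma join_cone_eq: "join_cone C1 C2 = C1 \<times> C2"
  unfolding join_cone_def by force

lemma pcc_D:
  assumes "proper_convex_cone C"
  shows "open C" "convex C" "C \<noteq> {}" "\<And>x t. x \<in> C \<Longrightarrow> t > 0 \<Longrightarrow> t *\<^sub>R x \<in> C"
    "\<And>p v. v \<noteq> 0 \<Longrightarrow> \<exists>t::real. p + t *\<^sub>R v \<notin> C"
  using assms unfolding proper_convex_cone_def by blast+

lemma closure_pos_scale:
  fixes K :: "'a::real_normed_vector set"
  assumes "\<forall>x\<in>K. \<forall>t>0. t *\<^sub>R x \<in> K" "k \<in> closure K" "t > 0"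
  shows "t *\<^sub>R k \<in> closure K"
proof -
  have "t *\<^sub>R k \<in> ((*\<^sub>R) t) ` closure K" using assms by blast
  also have "\<dots> = closure (((*\<^sub>R) t) ` K)" by (rule closure_scaleR)
  also have "\<dots> \<subseteq> closure K" using assms by (intro closure_mono) auto
  finally show ?thesis .
qed

lemma interior_pos_scale:
  fixes K :: "'a::real_normed_vector set"
  assumes "\<forall>x\<in>K. \<forall>t>0. t *\<^sub>R x \<in> K" "k \<in> interior K" "t > 0"
  shows "t *\<^sub>R k \<in> interior K"
proof -
  have o: "open (((*\<^sub>R) t) ` interior K)" using assms by (intro open_scaling) auto
  have "((*\<^sub>R) t) ` interior K \<subseteq> K" using assms interior_subset by blast
  hence "((*\<^sub>R) t) ` interior K \<subseteq> interior K" using o interior_maximal by blast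
  thus ?thesis using assms by blast
qed

lemma closure_plus_interior:
  fixes K :: "'a::euclidean_space set"
  assumes cone: "\<forall>x\<in>K. \<forall>t>0. t *\<^sub>R x \<in> K" and cv: "convex K"
    and k: "k \<in> closure K" and x: "x \<in> interior K"
  shows "k + x \<in> interior K"
proof -
  have k2: "2 *\<^sub>R k \<in> closure K" using closure_pos_scale[OF cone k] by simp
  have x2: "2 *\<^sub>R x \<in> interior K" using interior_pos_scale[OF cone x] by simp
  have mid: "midpoint (2 *\<^sub>R x) (2 *\<^sub>R k) = k + x"
    by (simp add: midpoint_def algebra_simps)
  show ?thesis
  proof (cases "2 *\<^sub>R x = 2 *\<^sub>R k")
    case True
    hence "k = x" by simp
    thus ?thesis using x2 by (simp add: scaleR_2)
  next
    case False
    hence "k + x \<in> open_segment (2 *\<^sub>R x) (2 *\<^sub>R k)" using mid midpoint_in_open_segment by metis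
    thus ?thesis using in_interior_closure_convex_segment[OF cv x2 k2] by blast
  qed
qed

lemma pcc_cone: "proper_convex_cone C \<Longrightarrow> \<forall>x\<in>C. \<forall>t>0. t *\<^sub>R x \<in> C"
  using pcc_D by blast

lemma pcc_closure_plus:
  fixes C :: "'a::euclidean_space set"
  assumes "proper_convex_cone C" "k \<in> closure C" "c \<in> C"
  shows "k + c \<in> C"
  using closure_plus_interior[OF pcc_cone[OF assms(1)] pcc_D(2)[OF assms(1)] assms(2)]
    assms(3) interior_open[OF pcc_D(1)[OF assms(1)]] by simp

lemma pcc_noline:
  fixes C :: "'a::euclidean_space set"
  assumes C: "proper_convex_cone C" and s: "s \<in> closure C" and ms: "-s \<in> closure C"
  shows "s = 0"
proof (rule ccontr)
  assume "s \<noteq> 0"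
  obtain c where c: "c \<in> C" using pcc_D(3)[OF C] by blast
  have "c + t *\<^sub>R s \<in> C" for t :: real
  proof (cases "t = 0")
    case True thus ?thesis using c by simp
  next
    case False
    show ?thesis
    proof (cases "t > 0")
      case True
      have "t *\<^sub>R s \<in> closure C" using closure_pos_scale[OF pcc_cone[OF C] s True] .
      from pcc_closure_plus[OF C this c] show ?thesis by (simp add: add.commute)
    next
      case f: False
      hence "-t > 0" using False by simp
      have "(-t) *\<^sub>R (-s) \<in> closure C" using closure_pos_scale[OF pcc_cone[OF C] ms \<open>-t>0\<close>] .
      from pcc_closure_plus[OF C this c] show ?thesis by (simp add: add.commute)
    qed
  qed
  thus False using pcc_D(5)[OF C \<open>s \<noteq> 0\<close>, of c] by blast
qed

lemma pcc_zero_notin: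
  fixes C :: "'a::euclidean_space set"
  assumes C: "proper_convex_cone C"
  shows "0 \<notin> C"
proof
  assume "0 \<in> C"
  then obtain e where e: "e > 0" "ball 0 e \<subseteq> C" using pcc_D(1)[OF C] open_contains_ball by blast
  obtain b :: 'a where b: "b \<in> Basis" using nonempty_Basis by blast
  define s where "s = (e/2) *\<^sub>R b"
  have ns: "norm s < e" using e b by (simp add: s_def)
  have "s \<in> C" "-s \<in> C" using ns e by (auto intro!: subsetD[OF e(2)])
  hence "s = 0" using pcc_noline[OF C] closure_subset by blast
  thus False using e b by (simp add: s_def)
qed

lemma pcc_zero_closure:
  fixes C :: "'a::euclidean_space set"
  assumes C: "proper_convex_cone C"
  shows "0 \<in> closure C"
proof -
  obtain c where c: "c \<in> C" using pcc_D(3)[OF C] by blast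
  have "(\<lambda>n. (1 / real (Suc n)) *\<^sub>R c) \<longlonglongrightarrow> 0 *\<^sub>R c"
    by (intro tendsto_scaleR tendsto_const) (rule LIMSEQ_Suc[OF lim_const_over_n])
  hence l: "(\<lambda>n. (1 / real (Suc n)) *\<^sub>R c) \<longlonglongrightarrow> 0" by simp
  have "\<forall>n. (1 / real (Suc n)) *\<^sub>R c \<in> C" using c pcc_D(4)[OF C] by simp
  with l show ?thesis unfolding closure_sequential by (intro exI[of _ "\<lambda>n. (1 / real (Suc n)) *\<^sub>R c"]) simp
qed

lemma pcc_closure_convex_cone:
  fixes C :: "'a::euclidean_space set"
  assumes C: "proper_convex_cone C"
  shows "convex_cone (closure C)"
  unfolding convex_cone_iff
proof (intro conjI ballI allI impI)
  show "0 \<in> closure C" by (rule pcc_zero_closure[OF C])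
next
  fix x c :: 'a and t :: real assume "x \<in> closure C" "0 \<le> t"
  thus "t *\<^sub>R x \<in> closure C" using closure_pos_scale[OF pcc_cone[OF C]] pcc_zero_closure[OF C]
    by (cases "t = 0") auto
next
  fix x y assume xy: "x \<in> closure C" "y \<in> closure C"
  have "(1/2) *\<^sub>R x + (1/2) *\<^sub>R y \<in> closure C"
    using convex_closure[OF pcc_D(2)[OF C]] xy unfolding convex_def by auto
  from closure_pos_scale[OF pcc_cone[OF C] this, of 2] show "x + y \<in> closure C"
    by (simp add: algebra_simps)
qed



lemma convex_cone_sum:
  assumes K: "convex_cone K" and F: "finite F"
  shows "(\<forall>v\<in>F. f v \<in> K) \<Longrightarrow> sum f F \<in> K"
  using F
proof (induction F rule: finite_induct)
  case empty thus ?case using K by (simp add: convex_cone_contains_0)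
next
  case (insert x F) thus ?case using K by (simp add: convex_cone_add)
qed

lemma pcc_dual:
  fixes C :: "'a::euclidean_space set"
  assumes C: "proper_convex_cone C"
  shows "\<exists>w \<epsilon>. \<epsilon> > 0 \<and> (\<forall>v\<in>C. w \<bullet> v \<ge> \<epsilon> * norm v)"
proof -
  define S where "S = closure C \<inter> sphere 0 1"
  have cS: "compact S" unfolding S_def by (intro closed_Int_compact) auto
  define H where "H = convex hull S"
  have cH: "closed H" unfolding H_def using cS compact_convex_hull compact_imp_closed by blast
  have KC: "convex_cone (closure C)" by (rule pcc_closure_convex_cone[OF C])
  have "0 \<notin> H"
  proof
    assume "0 \<in> H"
    then obtain F u where F: "finite F" "F \<subseteq> S" "\<forall>x\<in>F. 0 \<le> u x" "sum u F = 1"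
      "(\<Sum>v\<in>F. u v *\<^sub>R v) = 0"
      unfolding H_def convex_hull_explicit by blast
    have "\<exists>j\<in>F. u j > 0"
    proof (rule ccontr)
      assume "\<not> (\<exists>j\<in>F. u j > 0)"
      hence "\<forall>x\<in>F. u x \<le> 0" by force
      hence "sum u F \<le> 0" by (simp add: sum_nonpos)
      thus False using F by simp
    qed
    then obtain j where j: "j \<in> F" "u j > 0" by blast
    have rest: "(\<Sum>v\<in>F-{j}. u v *\<^sub>R v) \<in> closure C"
      using F(1,2,3) by (intro convex_cone_sum[OF KC]) (auto simp: S_def intro!: convex_cone_scaleR[OF KC])
    have "u j *\<^sub>R j + (\<Sum>v\<in>F-{j}. u v *\<^sub>R v) = 0"
      using F(1,5) j(1) by (simp add: sum.remove)
    hence "-(u j *\<^sub>R j) \<in> closure C" using rest by (metis add_eq_0_iff)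
    hence "(1 / u j) *\<^sub>R (-(u j *\<^sub>R j)) \<in> closure C" using j(2)
      by (intro convex_cone_scaleR[OF KC]) auto
    hence "-j \<in> closure C" using j(2) by simp
    moreover have "j \<in> closure C" "norm j = 1" using F(2) j(1) by (auto simp: S_def)
    ultimately show False using pcc_noline[OF C] by fastforce
  qed
  then obtain a b where ab: "0 < b" "\<forall>x\<in>H. inner a x > b"
    using separating_hyperplane_closed_0[OF _ cH] unfolding H_def by (auto simp: convex_convex_hull)
  have "\<forall>v\<in>C. a \<bullet> v \<ge> b * norm v"
  proof
    fix v assume v: "v \<in> C"
    have "v \<noteq> 0" using v pcc_zero_notin[OF C] by blast
    hence nv: "norm v > 0" by simp
    have "(1 / norm v) *\<^sub>R v \<in> C" using v nv pcc_D(4)[OF C] by simp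
    hence "(1 / norm v) *\<^sub>R v \<in> S" using nv closure_subset by (auto simp: S_def)
    hence "a \<bullet> ((1 / norm v) *\<^sub>R v) > b" using ab unfolding H_def by (meson hull_subset subsetD)
    hence "(a \<bullet> v) / norm v > b" by (simp add: inner_commute)
    thus "a \<bullet> v \<ge> b * norm v" using nv by (simp add: field_simps)
  qed
  thus ?thesis using ab(1) by blast
qed



lemma cross_ratio_eq: "cross_ratio (1, - a) (1, 0) (0, 1) (- b, 1) = 1 / (a * b)"
  by (simp add: cross_ratio_def det2_def)

lemma hilbert_dist_eq: "hilbert_dist C x y = ln (1 / (hilbert_param C x y * hilbert_param C y x)) / 2"
  by (simp add: hilbert_dist_def cross_ratio_eq Let_def)

lemma hilbert_dist_sym: "hilbert_dist C x y = hilbert_dist C y x"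
  by (simp add: hilbert_dist_eq mult.commute)

lemma hilbert_param_linear:
  assumes "linear g" "\<And>v. g v \<in> C \<longleftrightarrow> v \<in> C"
  shows "hilbert_param C (g x) (g y) = hilbert_param C x y"
proof -
  have "g x - t *\<^sub>R g y = g (x - t *\<^sub>R y)" for t
    using assms(1) by (simp add: linear_diff linear_scale)
  thus ?thesis unfolding hilbert_param_def using assms(2) by simp
qed

lemma hilbert_dist_linear:
  assumes "linear g" "\<And>v. g v \<in> C \<longleftrightarrow> v \<in> C"
  shows "hilbert_dist C (g x) (g y) = hilbert_dist C x y"
  using hilbert_param_linear[OF assms] by (simp add: hilbert_dist_eq)

lemma hilbert_param_bounds:
  fixes C :: "'a::real_inner set"
  assumes C: "open C" and x: "x \<in> C" and y: "y \<in> C" and phi: "\<forall>v\<in>C. \<phi> \<bullet> v > 0"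
  shows "0 < hilbert_param C x y" "hilbert_param C x y \<le> (\<phi> \<bullet> x) / (\<phi> \<bullet> y)"
proof -
  define T where "T = {t. 0 \<le> t \<and> x - t *\<^sub>R y \<in> C}"
  have py: "\<phi> \<bullet> y > 0" using phi y by blast
  have ub: "t \<le> (\<phi> \<bullet> x) / (\<phi> \<bullet> y)" if "t \<in> T" for t
  proof -
    have "\<phi> \<bullet> (x - t *\<^sub>R y) > 0" using phi that by (auto simp: T_def)
    hence "t * (\<phi> \<bullet> y) < \<phi> \<bullet> x" by (simp add: inner_diff_right)
    thus ?thesis using py by (simp add: field_simps)
  qed
  have ne: "0 \<in> T" using x by (simp add: T_def)
  hence bdd: "bdd_above T" using ub by (auto simp: bdd_above_def)
  show "hilbert_param C x y \<le> (\<phi> \<bullet> x) / (\<phi> \<bullet> y)"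
    unfolding hilbert_param_def T_def[symmetric] using ne ub by (intro cSup_least) auto
  obtain e where e: "e > 0" "ball x e \<subseteq> C" using C x open_contains_ball by blast
  define t where "t = e / (2 * (norm y + 1))"
  have "2 * (norm y + 1) > 0" by (smt (verit) norm_ge_zero)
  hence t: "t > 0" using e by (simp add: t_def)
  have "norm (t *\<^sub>R y) < e"
  proof -
    have "norm (t *\<^sub>R y) = t * norm y" using t by simp
    also have "\<dots> < t * (2 * (norm y + 1))" using t by (intro mult_strict_left_mono) (auto simp: add_nonneg_pos)
    also have "\<dots> = e" unfolding t_def using \<open>2 * (norm y + 1) > 0\<close> by simp
    finally show ?thesis .
  qed
  hence "x - t *\<^sub>R y \<in> ball x e" by (simp add: dist_norm)
  hence "t \<in> T" using e t by (auto simp: T_def)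
  hence "t \<le> Sup T" using bdd by (intro cSup_upper)
  thus "0 < hilbert_param C x y" unfolding hilbert_param_def T_def[symmetric] using t by simp
qed

lemma hilbert_dist_lower:
  fixes C :: "'a::real_inner set"
  assumes C: "open C" and x: "x \<in> C" and y: "y \<in> C"
    and phi: "\<forall>v\<in>C. \<phi> \<bullet> v > 0" and psi: "\<forall>v\<in>C. \<psi> \<bullet> v > 0"
  shows "hilbert_dist C x y \<ge> ln (((\<phi> \<bullet> y) * (\<psi> \<bullet> x)) / ((\<phi> \<bullet> x) * (\<psi> \<bullet> y))) / 2"
proof -
  define a where "a = hilbert_param C x y"
  define b where "b = hilbert_param C y x"
  have a: "0 < a" "a \<le> (\<phi> \<bullet> x) / (\<phi> \<bullet> y)" using hilbert_param_bounds[OF C x y phi] by (auto simp: a_def)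
  have b: "0 < b" "b \<le> (\<psi> \<bullet> y) / (\<psi> \<bullet> x)" using hilbert_param_bounds[OF C y x psi] by (auto simp: b_def)
  have p: "\<phi> \<bullet> x > 0" "\<phi> \<bullet> y > 0" "\<psi> \<bullet> x > 0" "\<psi> \<bullet> y > 0" using phi psi x y by auto
  have "a * b \<le> ((\<phi> \<bullet> x) / (\<phi> \<bullet> y)) * ((\<psi> \<bullet> y) / (\<psi> \<bullet> x))"
    using a b by (intro mult_mono) auto
  also have "\<dots> = 1 / (((\<phi> \<bullet> y) * (\<psi> \<bullet> x)) / ((\<phi> \<bullet> x) * (\<psi> \<bullet> y)))" using p by (simp add: field_simps)
  finally have ab: "a * b \<le> 1 / (((\<phi> \<bullet> y) * (\<psi> \<bullet> x)) / ((\<phi> \<bullet> x) * (\<psi> \<bullet> y)))" .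
  have pos: "((\<phi> \<bullet> y) * (\<psi> \<bullet> x)) / ((\<phi> \<bullet> x) * (\<psi> \<bullet> y)) > 0" using p by simp
  define R where "R = ((\<phi> \<bullet> y) * (\<psi> \<bullet> x)) / ((\<phi> \<bullet> x) * (\<psi> \<bullet> y))"
  have abp: "a * b > 0" using a(1) b(1) by simp
  have "a * b * R \<le> 1" using ab pos unfolding R_def[symmetric] by (simp add: field_simps)
  hence "R \<le> 1 / (a * b)" using abp by (simp add: field_simps mult.commute)
  hence "1 / (a * b) \<ge> ((\<phi> \<bullet> y) * (\<psi> \<bullet> x)) / ((\<phi> \<bullet> x) * (\<psi> \<bullet> y))"
    unfolding R_def .
  hence "ln (1 / (a * b)) \<ge> ln (((\<phi> \<bullet> y) * (\<psi> \<bullet> x)) / ((\<phi> \<bullet> x) * (\<psi> \<bullet> y)))"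
    using pos by (intro ln_mono) auto
  thus ?thesis by (simp add: hilbert_dist_eq a_def b_def)
qed



definition thick :: "'c::real_vector \<Rightarrow> 'c set \<Rightarrow> 'c set" where
  "thick w Z = {y + s *\<^sub>R w | y s. y \<in> Z \<and> s \<in> {0..1::real}}"

lemma seg_null:
  fixes w z :: "'c::euclidean_space"
  assumes "DIM('c) \<ge> 2"
  shows "thick w {z} \<in> null_sets lebesgue"
proof -
  have "dim (span {w}) < DIM('c)" using assms by simp
  hence "negligible (span {w})" by (rule negligible_lowdim)
  hence "negligible ((+) z ` span {w})" by (rule negligible_translation)
  moreover have "thick w {z} \<subseteq> (+) z ` span {w}"
    unfolding thick_def by (auto intro: span_mul span_base)
  ultimately have "negligible (thick w {z})" by (rule negligible_subset)
  thus ?thesis by (simp add: negligible_iff_null_sets)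
qed

lemma cyl_cover:
  fixes w z :: "'c::real_normed_vector"
  assumes r: "r > 0" and N: "N \<ge> 1" "norm w \<le> real N * r"
  shows "thick w (cball z r) \<subseteq> (\<Union>k\<in>{0..N}. cball (z + (real k / real N) *\<^sub>R w) (2 * r))"
proof
  fix p assume "p \<in> thick w (cball z r)"
  then obtain y s where p: "p = y + s *\<^sub>R w" and y: "dist z y \<le> r" and s: "0 \<le> s" "s \<le> 1"
    unfolding thick_def by auto
  define k where "k = nat \<lfloor>s * real N\<rfloor>"
  have sN: "0 \<le> s * real N" using s by simp
  have k1: "real k \<le> s * real N" unfolding k_def using sN by linarith
  have k2: "s * real N < real k + 1" unfolding k_def using sN by linarith
  have kN: "k \<le> N"
  proof -
    have "s * real N \<le> real N" using s by (simp add: mult_left_le_one_le)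
    thus ?thesis unfolding k_def by (simp add: nat_le_iff floor_le_iff)
  qed
  have Npos: "real N > 0" using N by simp
  have e: "s - real k / real N = (s * real N - real k) / real N" using Npos by (simp add: field_simps)
  have "0 \<le> (s * real N - real k) / real N" "(s * real N - real k) / real N \<le> 1 / real N"
    using k1 k2 Npos by (auto intro: divide_right_mono)
  hence d: "\<bar>s - real k / real N\<bar> \<le> 1 / real N" unfolding e by simp
  have "dist p (z + (real k / real N) *\<^sub>R w) = norm ((y - z) + (s - real k / real N) *\<^sub>R w)"
    unfolding p dist_norm by (simp add: algebra_simps)
  also have "\<dots> \<le> norm (y - z) + \<bar>s - real k / real N\<bar> * norm w"
    by (rule order_trans[OF norm_triangle_ineq]) simp
  also have "\<dots> \<le> r + (1 / real N) * (real N * r)"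
    using y d N(2) by (intro add_mono mult_mono) (auto simp: dist_norm norm_minus_commute)
  also have "\<dots> = 2 * r" using Npos by simp
  finally show "p \<in> (\<Union>k\<in>{0..N}. cball (z + (real k / real N) *\<^sub>R w) (2 * r))"
    using kN by (auto simp: dist_commute)
qed

lemma cyl_measure:
  fixes w z :: "'c::euclidean_space"
  assumes r: "r > 0" and N: "N \<ge> 1" "norm w \<le> real N * r"
  defines "S \<equiv> (\<Union>k\<in>{0..N}. cball (z + (real k / real N) *\<^sub>R w) (2 * r))"
  shows "S \<in> sets lebesgue" "thick w (cball z r) \<subseteq> S"
    "emeasure lebesgue S \<le> ennreal ((real N + 1) * unit_ball_vol (DIM('c)) * (2 * r) ^ DIM('c))"
proof -
  show "S \<in> sets lebesgue" unfolding S_def by (intro sets.finite_UN) auto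
  show "thick w (cball z r) \<subseteq> S" unfolding S_def by (rule cyl_cover[OF assms(1-3)])
  have "emeasure lebesgue S \<le> (\<Sum>k\<in>{0..N}. emeasure lebesgue (cball (z + (real k / real N) *\<^sub>R w) (2 * r)))"
    unfolding S_def by (intro emeasure_subadditive_finite) auto
  also have "\<dots> = (\<Sum>k\<in>{0..N}. ennreal (unit_ball_vol (DIM('c)) * (2 * r) ^ DIM('c)))"
  proof -
    have eq: "emeasure lebesgue (cball c \<rho>) = ennreal (unit_ball_vol (DIM('c)) * \<rho> ^ DIM('c))"
      if "\<rho> \<ge> 0" for c :: 'c and \<rho>
      using emeasure_cball[OF that, of c] by simp
    show ?thesis using r by (simp only: eq[of "2 * r"])
  qed
  also have "\<dots> = ennreal ((real N + 1) * unit_ball_vol (DIM('c)) * (2 * r) ^ DIM('c))"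
    using r by (simp add: ennreal_of_nat_eq_real_of_nat ennreal_mult[symmetric] algebra_simps)
  finally show "emeasure lebesgue S \<le> ennreal ((real N + 1) * unit_ball_vol (DIM('c)) * (2 * r) ^ DIM('c))" .
qed

lemma N_bound:
  fixes a r rmax :: real and d :: nat
  assumes r: "r > 0" "r \<le> rmax" and a: "a > 0"
  defines "N \<equiv> nat \<lceil>a / r\<rceil>"
  shows "N \<ge> 1" "a \<le> real N * r" "(real N + 1) * r ^ Suc d \<le> (a + 2 * rmax) * r ^ d"
proof -
  have ar: "a / r > 0" using r a by simp
  show "N \<ge> 1" unfolding N_def using ar by linarith
  have "a / r \<le> real N" unfolding N_def by linarith
  thus "a \<le> real N * r" using r by (simp add: field_simps)
  have "real N \<le> a / r + 1" unfolding N_def using ar by linarith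
  hence "(real N + 1) * r \<le> (a / r + 2) * r" using r by (intro mult_right_mono) auto
  also have "\<dots> = a + 2 * r" using r by (simp add: field_simps)
  also have "\<dots> \<le> a + 2 * rmax" using r by simp
  finally have "(real N + 1) * r * r ^ d \<le> (a + 2 * rmax) * r ^ d"
    using r by (intro mult_right_mono) auto
  thus "(real N + 1) * r ^ Suc d \<le> (a + 2 * rmax) * r ^ d" by (simp add: mult.assoc)
qed



lemma thick_mono: "Z \<subseteq> Z' \<Longrightarrow> thick w Z \<subseteq> thick w Z'"
  unfolding thick_def by blast

lemma thick_UN: "Z \<subseteq> (\<Union>i. V i) \<Longrightarrow> thick w Z \<subseteq> (\<Union>i. thick w (V i))"
  unfolding thick_def by blast

lemma ball_in_thick:
  fixes w0 q :: "'c::euclidean_space"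
  assumes w0: "w0 \<noteq> 0" and rho: "\<rho> > 0"
  defines "\<theta> \<equiv> min (\<rho>/3) (norm w0/3)"
  shows "cball (q + (1/2) *\<^sub>R w0) (\<theta>/2) \<subseteq> thick w0 {x \<in> ball q \<rho>. w0 \<bullet> x = w0 \<bullet> q}"
proof
  fix p assume p: "p \<in> cball (q + (1/2) *\<^sub>R w0) (\<theta>/2)"
  define nw where "nw = norm w0"
  have nw: "nw > 0" using w0 by (simp add: nw_def)
  have ww: "w0 \<bullet> w0 = nw^2" by (simp add: nw_def power2_norm_eq_inner)
  define e where "e = p - (q + (1/2) *\<^sub>R w0)"
  have ne: "norm e \<le> \<theta>/2" using p by (simp add: e_def dist_norm norm_minus_commute)
  define s where "s = (w0 \<bullet> p - w0 \<bullet> q) / (w0 \<bullet> w0)"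
  define y where "y = p - s *\<^sub>R w0"
  have pe: "p = e + q + (1/2) *\<^sub>R w0" by (simp add: e_def)
  have s2: "s - 1/2 = (w0 \<bullet> e) / nw^2"
    unfolding s_def ww using nw by (simp add: pe inner_add_right field_simps ww power2_eq_square)
  have "\<bar>w0 \<bullet> e\<bar> \<le> nw * norm e" unfolding nw_def by (rule Cauchy_Schwarz_ineq2)
  hence "\<bar>w0 \<bullet> e\<bar> \<le> nw * (\<theta>/2)" using ne nw by (smt (verit) mult_left_mono)
  hence "\<bar>s - 1/2\<bar> \<le> nw * (\<theta>/2) / nw^2" unfolding s2 using nw by (simp add: abs_div divide_right_mono del: times_divide_eq_right)
  also have "\<dots> = \<theta> / (2 * nw)" using nw by (simp add: power2_eq_square field_simps)
  finally have sb: "\<bar>s - 1/2\<bar> \<le> \<theta> / (2 * nw)" .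
  have "\<theta> \<le> nw / 3" unfolding \<theta>_def nw_def by simp
  hence "\<theta> / (2 * nw) \<le> 1/6" using nw by (simp add: field_simps)
  hence s01: "s \<in> {0..1}" using sb by (auto simp: abs_le_iff)
  have "y - q = e - (s - 1/2) *\<^sub>R w0" by (simp add: y_def pe algebra_simps)
  hence "norm (y - q) \<le> norm e + \<bar>s - 1/2\<bar> * nw"
    by (metis norm_triangle_ineq4 norm_scaleR nw_def)
  also have "\<dots> \<le> \<theta>/2 + \<theta> / (2 * nw) * nw" using ne sb nw by (intro add_mono mult_right_mono) auto
  also have "\<dots> = \<theta>" using nw by simp
  also have "\<dots> < \<rho>" unfolding \<theta>_def using rho by simp
  finally have yb: "y \<in> ball q \<rho>" by (simp add: dist_norm norm_minus_commute)
  have "w0 \<bullet> y = w0 \<bullet> q" unfolding y_def s_def using nw ww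
    by (simp add: inner_diff_right field_simps power2_eq_square)
  moreover have "p = y + s *\<^sub>R w0" by (simp add: y_def)
  ultimately show "p \<in> thick w0 {x \<in> ball q \<rho>. w0 \<bullet> x = w0 \<bullet> q}"
    unfolding thick_def using yb s01 by blast
qed



lemma core_measure:
  fixes w0 q :: "'c::euclidean_space"
  assumes dim: "DIM('c) \<ge> 2" and w0: "w0 \<noteq> 0" and rho: "\<rho> > 0" and kap: "\<kappa> > 0"
    and Dmax: "Dmax \<ge> 0"
  shows "\<exists>m::real. m > 0 \<and> (\<forall>(V :: nat \<Rightarrow> 'c set) (D :: nat \<Rightarrow> real).
     {x \<in> ball q \<rho>. w0 \<bullet> x = w0 \<bullet> q} \<subseteq> (\<Union>i. V i) \<longrightarrow> (\<forall>i. 0 \<le> D i \<and> D i \<le> Dmax) \<longrightarrow>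
     (\<forall>i. \<forall>x\<in>V i. \<forall>y\<in>V i. \<kappa> * norm (x - y) \<le> D i) \<longrightarrow>
     ennreal m \<le> (\<Sum>i. if V i = {} then 0
        else ennreal (unit_ball_vol (real (DIM('c) - 1)) * (D i / 2) ^ (DIM('c) - 1))))"
proof -
  define n where "n = DIM('c)"
  define d where "d = n - 1"
  have nd: "n = Suc d" using dim by (simp add: n_def d_def)
  define rmax where "rmax = Dmax / \<kappa>"
  have rmax: "rmax \<ge> 0" using Dmax kap by (simp add: rmax_def)
  define \<beta> where "\<beta> = unit_ball_vol (real d) * (1/2)^d"
  have \<beta>: "\<beta> > 0" by (simp add: \<beta>_def)
  define A where "A = unit_ball_vol n * 2^n * (norm w0 + 2*rmax) / \<kappa>^d"
  have A: "A > 0" using w0 rmax kap by (simp add: A_def add_pos_nonneg)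
  define A' where "A' = A / \<beta>"
  have A': "A' > 0" using A \<beta> by (simp add: A'_def)
  define \<theta> where "\<theta> = min (\<rho>/3) (norm w0/3)"
  have \<theta>: "\<theta> > 0" using rho w0 by (simp add: \<theta>_def)
  define cs where "cs = q + (1/2) *\<^sub>R w0"
  define Bp where "Bp = {x \<in> ball q \<rho>. w0 \<bullet> x = w0 \<bullet> q}"
  have ballsub: "cball cs (\<theta>/2) \<subseteq> thick w0 Bp"
    unfolding cs_def Bp_def \<theta>_def by (rule ball_in_thick[OF w0 rho])
  define M where "M = unit_ball_vol n * (\<theta>/2)^n"
  have M: "M > 0" using \<theta> by (simp add: M_def)
  have Mmeas: "emeasure lebesgue (cball cs (\<theta>/2)) = ennreal M"
    using emeasure_cball[of "\<theta>/2" cs] \<theta> by (simp add: M_def n_def)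
  define m where "m = M / A'"
  have m: "m > 0" using M A' by (simp add: m_def)
  show ?thesis
  proof (intro exI[of _ m] conjI allI impI)
    show "m > 0" by (rule m)
  next
    fix V :: "nat \<Rightarrow> 'c set" and D :: "nat \<Rightarrow> real"
    assume cov: "{x \<in> ball q \<rho>. w0 \<bullet> x = w0 \<bullet> q} \<subseteq> (\<Union>i. V i)"
      and hD: "\<forall>i. 0 \<le> D i \<and> D i \<le> Dmax"
      and hV: "\<forall>i. \<forall>x\<in>V i. \<forall>y\<in>V i. \<kappa> * norm (x - y) \<le> D i"
    define tm where "tm i = (if V i = {} then 0
        else ennreal (unit_ball_vol (real (DIM('c) - 1)) * (D i / 2) ^ (DIM('c) - 1)))" for i
    have each: "\<exists>S. S \<in> sets lebesgue \<and> thick w0 (V i) \<subseteq> S \<and> emeasure lebesgue S \<le> ennreal A' * tm i" for i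
    proof (cases "V i = {}")
      case True
      thus ?thesis by (intro exI[of _ "{}"]) (simp add: thick_def)
    next
      case False
      then obtain z where z: "z \<in> V i" by blast
      have Vsub: "V i \<subseteq> cball z (D i / \<kappa>)"
      proof
        fix y assume "y \<in> V i"
        hence "\<kappa> * norm (z - y) \<le> D i" using hV z by blast
        thus "y \<in> cball z (D i / \<kappa>)" using kap by (simp add: dist_norm field_simps)
      qed
      have tmi: "tm i = ennreal (\<beta> * D i ^ d)"
        using False hD by (simp add: tm_def \<beta>_def d_def n_def power_divide field_simps)
      show ?thesis
      proof (cases "D i = 0")
        case True
        hence "V i \<subseteq> {z}" using Vsub by simp
        hence sub: "thick w0 (V i) \<subseteq> thick w0 {z}" by (rule thick_mono)
        have "thick w0 {z} \<in> null_sets lebesgue" using seg_null[OF dim] .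
        thus ?thesis using sub by (intro exI[of _ "thick w0 {z}"]) auto
      next
        case False
        define r where "r = D i / \<kappa>"
        have r: "r > 0" "r \<le> rmax" using False hD kap
          by (auto simp: r_def rmax_def divide_right_mono less_le)
        define N where "N = nat \<lceil>norm w0 / r\<rceil>"
        have Nb: "N \<ge> 1" "norm w0 \<le> real N * r" "(real N + 1) * r ^ Suc d \<le> (norm w0 + 2 * rmax) * r ^ d"
          using N_bound(1,2)[OF r, where a="norm w0"] N_bound(3)[OF r, where a="norm w0" and d=d] w0
          by (simp_all add: N_def)
        define S where "S = (\<Union>k\<in>{0..N}. cball (z + (real k / real N) *\<^sub>R w0) (2 * r))"
        have cm: "S \<in> sets lebesgue" "thick w0 (cball z r) \<subseteq> S"
          "emeasure lebesgue S \<le> ennreal ((real N + 1) * unit_ball_vol (DIM('c)) * (2 * r) ^ DIM('c))"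
          using cyl_measure[OF r(1) Nb(1,2), of z] by (simp_all add: S_def)
        have "(real N + 1) * unit_ball_vol (DIM('c)) * (2 * r) ^ DIM('c)
            = unit_ball_vol n * 2^n * ((real N + 1) * r ^ Suc d)"
          by (simp add: n_def[symmetric] nd power_mult_distrib)
        also have "\<dots> \<le> unit_ball_vol n * 2^n * ((norm w0 + 2 * rmax) * r ^ d)"
          using Nb(3) by (intro mult_left_mono) auto
        also have "\<dots> = A * D i ^ d"
          using kap by (simp add: A_def r_def power_divide field_simps)
        also have "\<dots> = A' * (\<beta> * D i ^ d)" using \<beta> by (simp add: A'_def)
        finally have le: "(real N + 1) * unit_ball_vol (DIM('c)) * (2 * r) ^ DIM('c) \<le> A' * (\<beta> * D i ^ d)" .
        have "emeasure lebesgue S \<le> ennreal (A' * (\<beta> * D i ^ d))"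
          using cm(3) le order_trans ennreal_leI by blast
        also have "\<dots> = ennreal A' * tm i" using A' \<beta> hD by (simp add: tmi ennreal_mult)
        finally have "emeasure lebesgue S \<le> ennreal A' * tm i" .
        moreover have "thick w0 (V i) \<subseteq> S" using cm(2) thick_mono[OF Vsub, of w0] unfolding r_def by blast
        ultimately show ?thesis using cm(1) by blast
      qed
    qed
    then obtain Cov where Cov: "\<And>i. Cov i \<in> sets lebesgue" "\<And>i. thick w0 (V i) \<subseteq> Cov i"
      "\<And>i. emeasure lebesgue (Cov i) \<le> ennreal A' * tm i"
      by metis
    have "cball cs (\<theta>/2) \<subseteq> (\<Union>i. Cov i)"
      using ballsub thick_UN[OF cov[folded Bp_def], of w0] Cov(2) by blast
    hence "ennreal M \<le> emeasure lebesgue (\<Union>i. Cov i)"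
      unfolding Mmeas[symmetric] using Cov(1) by (intro emeasure_mono) auto
    also have "\<dots> \<le> (\<Sum>i. emeasure lebesgue (Cov i))"
      using Cov(1) by (intro emeasure_subadditive_countably) auto
    also have "\<dots> \<le> (\<Sum>i. ennreal A' * tm i)"
      using Cov(3) by (intro suminf_le summableI) auto
    also have "\<dots> = ennreal A' * (\<Sum>i. tm i)" by simp
    finally have le2: "ennreal M \<le> ennreal A' * (\<Sum>i. tm i)" .
    have "ennreal A' * ennreal m = ennreal M"
      using A' M by (simp add: m_def ennreal_mult[symmetric])
    hence "ennreal A' * ennreal m \<le> ennreal A' * (\<Sum>i. tm i)" using le2 by simp
    hence "ennreal m \<le> (\<Sum>i. tm i)" using A' by (simp add: ennreal_mult_le_mult_iff)
    thus "ennreal m \<le> (\<Sum>i. if V i = {} then 0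
        else ennreal (unit_ball_vol (real (DIM('c) - 1)) * (D i / 2) ^ (DIM('c) - 1)))"
      by (simp add: tm_def)
  qed
qed



lemma hilbert_dist_self_nonneg:
  fixes C :: "'c::real_inner set"
  assumes C: "open C" and x: "x \<in> C" and w: "\<forall>v\<in>C. w \<bullet> v > 0"
  shows "hilbert_dist C x x \<ge> 0"
proof -
  have "hilbert_dist C x x \<ge> ln (((w \<bullet> x) * (w \<bullet> x)) / ((w \<bullet> x) * (w \<bullet> x))) / 2"
    by (rule hilbert_dist_lower[OF C x x w w])
  moreover have "w \<bullet> x > 0" using w x by blast
  ultimately show ?thesis by simp
qed

lemma local_dist:
  fixes C :: "'c::euclidean_space set"
  assumes C: "open C" and posC: "\<forall>v\<in>C. w0 \<bullet> v \<ge> \<epsilon> * norm v" and eps: "\<epsilon> > 0"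
    and z: "0 \<notin> C" and x: "x \<in> C" and y: "y \<in> C"
    and hx: "w0 \<bullet> x = c0" and hy: "w0 \<bullet> y = c0" and R: "norm y \<le> R"
  shows "(\<epsilon>/2) / (2 * (c0 + (\<epsilon>/2) * R)) * norm (x - y) \<le> hilbert_dist C x y"
proof -
  have pos0: "\<forall>v\<in>C. w0 \<bullet> v > 0"
  proof
    fix v assume v: "v \<in> C"
    hence "v \<noteq> 0" using z by blast
    hence "\<epsilon> * norm v > 0" using eps by simp
    thus "w0 \<bullet> v > 0" using posC v by (meson less_le_trans)
  qed
  have c0: "c0 > 0" using pos0 x hx by blast
  have Rn: "R \<ge> 0" using R norm_ge_zero order_trans by blast
  define r where "r = \<epsilon>/2"
  have r: "r > 0" using eps by (simp add: r_def)
  have den: "2 * (c0 + r * R) > 0" using c0 r Rn by (simp add: add_pos_nonneg)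
  show ?thesis
  proof (cases "x = y")
    case True
    thus ?thesis using hilbert_dist_self_nonneg[OF C y pos0] by simp
  next
    case False
    define u where "u = (1 / norm (x - y)) *\<^sub>R (x - y)"
    have nxy: "norm (x - y) > 0" using False by simp
    have nu: "norm u = 1" using nxy by (simp add: u_def)
    have uxy: "u \<bullet> (x - y) = norm (x - y)"
      using nxy by (simp add: u_def power2_norm_eq_inner[symmetric] power2_eq_square)
    define \<phi> where "\<phi> = w0 - r *\<^sub>R u"
    have phipos: "\<forall>v\<in>C. \<phi> \<bullet> v > 0"
    proof
      fix v assume v: "v \<in> C"
      hence "v \<noteq> 0" using z by blast
      hence nv: "norm v > 0" by simp
      have "\<bar>u \<bullet> v\<bar> \<le> norm v" using Cauchy_Schwarz_ineq2[of u v] nu by simp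
      hence "r * (u \<bullet> v) \<le> r * norm v" using r by (intro mult_left_mono) auto
      moreover have "w0 \<bullet> v \<ge> 2 * r * norm v" using posC v by (simp add: r_def)
      ultimately have "\<phi> \<bullet> v \<ge> r * norm v" by (simp add: \<phi>_def inner_diff_left)
      thus "\<phi> \<bullet> v > 0" using r nv by (smt (verit) mult_pos_pos)
    qed
    have px: "\<phi> \<bullet> x > 0" and py: "\<phi> \<bullet> y > 0" using phipos x y by auto
    have low: "hilbert_dist C x y \<ge> ln (((\<phi> \<bullet> y) * (w0 \<bullet> x)) / ((\<phi> \<bullet> x) * (w0 \<bullet> y))) / 2"
      by (rule hilbert_dist_lower[OF C x y phipos pos0])
    have eq: "((\<phi> \<bullet> y) * (w0 \<bullet> x)) / ((\<phi> \<bullet> x) * (w0 \<bullet> y)) = (\<phi> \<bullet> y) / (\<phi> \<bullet> x)"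
      using hx hy c0 by simp
    have diff: "\<phi> \<bullet> y - \<phi> \<bullet> x = r * norm (x - y)"
      using uxy hx hy by (simp add: \<phi>_def inner_diff_left inner_diff_right algebra_simps)
    have "ln ((\<phi> \<bullet> x) / (\<phi> \<bullet> y)) \<le> (\<phi> \<bullet> x) / (\<phi> \<bullet> y) - 1"
      using px py by (intro ln_le_minus_one) simp
    hence l1: "ln ((\<phi> \<bullet> y) / (\<phi> \<bullet> x)) \<ge> 1 - (\<phi> \<bullet> x) / (\<phi> \<bullet> y)"
      using px py by (simp add: ln_div)
    have "1 - (\<phi> \<bullet> x) / (\<phi> \<bullet> y) = r * norm (x - y) / (\<phi> \<bullet> y)"
      using py diff by (simp add: field_simps)
    have "\<bar>u \<bullet> y\<bar> \<le> norm y" using Cauchy_Schwarz_ineq2[of u y] nu by simp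
    hence "- (u \<bullet> y) \<le> R" using R by linarith
    hence "r * (- (u \<bullet> y)) \<le> r * R" using r by (intro mult_left_mono) auto
    moreover have "\<phi> \<bullet> y = c0 + r * (- (u \<bullet> y))" using hy by (simp add: \<phi>_def inner_diff_left)
    ultimately have "\<phi> \<bullet> y \<le> c0 + r * R" by linarith
    hence "r * norm (x - y) / (c0 + r * R) \<le> r * norm (x - y) / (\<phi> \<bullet> y)"
      using py r nxy by (intro divide_left_mono) auto
    hence "r * norm (x - y) / (c0 + r * R) \<le> ln ((\<phi> \<bullet> y) / (\<phi> \<bullet> x))"
      using l1 \<open>1 - (\<phi> \<bullet> x) / (\<phi> \<bullet> y) = r * norm (x - y) / (\<phi> \<bullet> y)\<close> by linarith
    hence h2: "(r * norm (x - y) / (c0 + r * R)) / 2 \<le> ln ((\<phi> \<bullet> y) / (\<phi> \<bullet> x)) / 2"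
      by (rule divide_right_mono) simp
    have eqd: "r / (2 * (c0 + r * R)) * norm (x - y) = (r * norm (x - y) / (c0 + r * R)) / 2"
      using den by (simp add: field_simps)
    have "r / (2 * (c0 + r * R)) * norm (x - y) \<le> ln ((\<phi> \<bullet> y) / (\<phi> \<bullet> x)) / 2"
      unfolding eqd by (rule h2)
    moreover have "ln ((\<phi> \<bullet> y) / (\<phi> \<bullet> x)) / 2 \<le> hilbert_dist C x y" using low unfolding eq .
    ultimately show ?thesis unfolding r_def by (rule order_trans)
  qed
qed

lemma far_dist:
  fixes C1 :: "'a::euclidean_space set" and C2 :: "'b::euclidean_space set"
  assumes C: "open (C1 \<times> C2)" and p1: "\<forall>v\<in>C1. w1 \<bullet> v > 0" and p2: "\<forall>v\<in>C2. w2 \<bullet> v > 0"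
    and X: "X \<in> C1 \<times> C2" and Y: "Y \<in> C1 \<times> C2"
    and rat: "(w2 \<bullet> snd Y) * (w1 \<bullet> fst X) \<ge> 3 * ((w2 \<bullet> snd X) * (w1 \<bullet> fst Y))"
  shows "hilbert_dist (C1 \<times> C2) X Y > 1/2"
proof -
  have phi: "\<forall>v\<in>C1 \<times> C2. (0, w2) \<bullet> v > 0" using p2 by (auto simp: inner_prod_def)
  have psi: "\<forall>v\<in>C1 \<times> C2. (w1, 0) \<bullet> v > 0" using p1 by (auto simp: inner_prod_def)
  have low: "hilbert_dist (C1 \<times> C2) X Y \<ge>
      ln ((((0, w2) \<bullet> Y) * ((w1, 0) \<bullet> X)) / (((0, w2) \<bullet> X) * ((w1, 0) \<bullet> Y))) / 2"
    by (rule hilbert_dist_lower[OF C X Y phi psi])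
  have e1: "(0, w2) \<bullet> V = w2 \<bullet> snd V" for V :: "'a \<times> 'b" by (simp add: inner_prod_def)
  have e2: "(w1, 0) \<bullet> V = w1 \<bullet> fst V" for V :: "'a \<times> 'b" by (simp add: inner_prod_def)
  have pos: "(w2 \<bullet> snd X) * (w1 \<bullet> fst Y) > 0" using p1 p2 X Y by (auto simp: mem_Times_iff)
  have "3 \<le> ((w2 \<bullet> snd Y) * (w1 \<bullet> fst X)) / ((w2 \<bullet> snd X) * (w1 \<bullet> fst Y))"
    using rat pos by (simp add: field_simps)
  hence "ln 3 \<le> ln (((w2 \<bullet> snd Y) * (w1 \<bullet> fst X)) / ((w2 \<bullet> snd X) * (w1 \<bullet> fst Y)))"
    by (intro ln_mono) auto
  hence "1 < ln (((w2 \<bullet> snd Y) * (w1 \<bullet> fst X)) / ((w2 \<bullet> snd X) * (w1 \<bullet> fst Y)))"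
    using ln3_gt_1 by linarith
  thus ?thesis using low unfolding e1 e2 by linarith
qed



definition gmap :: "real \<Rightarrow> ('a::real_vector \<times> 'b::real_vector) \<Rightarrow> 'a \<times> 'b" where
  "gmap l v = (l *\<^sub>R fst v, snd v)"

lemma gmap_linear: "linear (gmap l)"
  by (rule linearI) (auto simp: gmap_def algebra_simps)

lemma gmap_C:
  assumes "\<forall>x\<in>C1. \<forall>t>0. t *\<^sub>R x \<in> C1" "l > 0"
  shows "gmap l v \<in> C1 \<times> C2 \<longleftrightarrow> v \<in> C1 \<times> C2"
proof -
  have "l *\<^sub>R fst v \<in> C1 \<longleftrightarrow> fst v \<in> C1"
  proof
    assume h: "l *\<^sub>R fst v \<in> C1"
    have all: "\<forall>t>0. t *\<^sub>R (l *\<^sub>R fst v) \<in> C1" using assms(1) h by blast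
    have "(1/l) *\<^sub>R (l *\<^sub>R fst v) \<in> C1" using all[rule_format, of "1/l"] assms(2) by simp
    thus "fst v \<in> C1" using assms(2) by simp
  qed (use assms in auto)
  thus ?thesis by (simp add: gmap_def mem_Times_iff)
qed

lemma gmap_good:
  fixes K :: "('a::euclidean_space \<times> 'b::euclidean_space) set"
  assumes cone: "\<forall>x\<in>K. \<forall>t>0. t *\<^sub>R x \<in> K" and cv: "convex K"
    and b: "b \<in> interior K" and b0: "(fst b, 0) \<in> closure K" and l: "l \<ge> 1"
  shows "gmap l b \<in> interior K"
proof (cases "l = 1")
  case True thus ?thesis using b by (simp add: gmap_def)
next
  case False
  hence "l - 1 > 0" using l by simp
  hence "(l - 1) *\<^sub>R (fst b, 0) \<in> closure K" by (rule closure_pos_scale[OF cone b0])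
  hence "(l - 1) *\<^sub>R (fst b, 0) + b \<in> interior K" by (rule closure_plus_interior[OF cone cv _ b])
  moreover have "(l - 1) *\<^sub>R (fst b, 0) + b = gmap l b"
    by (cases b) (simp add: gmap_def algebra_simps)
  ultimately show ?thesis by simp
qed

lemma get_q:
  fixes C1 :: "'a::euclidean_space set" and C2 :: "'b::euclidean_space set"
    and K :: "('a \<times> 'b) set"
  assumes C1: "proper_convex_cone C1" and C2: "proper_convex_cone C2"
    and KC: "K \<subseteq> C1 \<times> C2" and cone: "\<forall>x\<in>K. \<forall>t>0. t *\<^sub>R x \<in> K"
    and cv: "convex K" and iK: "interior K \<noteq> {}"
    and U: "\<exists>U. open U \<and> U \<noteq> {} \<and> U \<subseteq> proj_lift C1 \<and>
           (\<forall>u\<in>U. (u, 0) \<in> closure (proj_lift K))"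
  shows "\<exists>q \<rho>. \<rho> > 0 \<and> (\<forall>b \<in> ball q \<rho>. b \<in> interior K \<and> (fst b, 0) \<in> closure K)"
proof -
  obtain U where U: "open U" "U \<noteq> {}" "U \<subseteq> C1 \<union> uminus ` C1"
    "\<forall>u\<in>U. (u, 0) \<in> closure (K \<union> uminus ` K)"
    using U unfolding proj_lift_def by blast
  obtain u0 where u0: "u0 \<in> U" using U(2) by blast
  obtain \<sigma> :: real where sg: "\<sigma> = 1 \<or> \<sigma> = -1" "\<sigma> *\<^sub>R u0 \<in> C1"
  proof (cases "u0 \<in> C1")
    case True thus ?thesis using that[of 1] by simp
  next
    case False
    hence "-u0 \<in> C1" using U(3) u0 by force
    thus ?thesis using that[of "-1"] by simp
  qed
  have ss: "\<sigma> * \<sigma> = 1" using sg(1) by auto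
  define U2 where "U2 = C1 \<inter> ((*\<^sub>R) \<sigma>) ` U"
  have oU2: "open U2" unfolding U2_def using sg(1) U(1) pcc_D(1)[OF C1]
    by (intro open_Int open_scaling) auto
  have memU2: "u \<in> U2 \<longleftrightarrow> u \<in> C1 \<and> \<sigma> *\<^sub>R u \<in> U" for u
  proof -
    have "u \<in> ((*\<^sub>R) \<sigma>) ` U \<longleftrightarrow> \<sigma> *\<^sub>R u \<in> U"
    proof
      assume "u \<in> ((*\<^sub>R) \<sigma>) ` U"
      then obtain v where "v \<in> U" "u = \<sigma> *\<^sub>R v" by blast
      thus "\<sigma> *\<^sub>R u \<in> U" using ss by simp
    next
      assume "\<sigma> *\<^sub>R u \<in> U"
      moreover have "u = \<sigma> *\<^sub>R (\<sigma> *\<^sub>R u)" using ss by simp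
      ultimately show "u \<in> ((*\<^sub>R) \<sigma>) ` U" by blast
    qed
    thus ?thesis by (simp add: U2_def)
  qed
  have symm: "uminus ` (K \<union> uminus ` K) = K \<union> uminus ` K" by (simp add: image_Un image_image Un_commute)
  have symcl: "-z \<in> closure (K \<union> uminus ` K)" if "z \<in> closure (K \<union> uminus ` K)" for z
  proof -
    have "-z \<in> ((*\<^sub>R) (-1)) ` closure (K \<union> uminus ` K)" using that by force
    also have "\<dots> = closure (((*\<^sub>R) (-1)) ` (K \<union> uminus ` K))" by (rule closure_scaleR)
    also have "((*\<^sub>R) (-1)) ` (K \<union> uminus ` K) = K \<union> uminus ` K"
      using symm by (simp add: image_comp o_def)
    finally show ?thesis .
  qed
  have inK: "(u, 0) \<in> closure K" if u: "u \<in> U2" for u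
  proof -
    have uC: "u \<in> C1" "\<sigma> *\<^sub>R u \<in> U" using u memU2 by auto
    have "(\<sigma> *\<^sub>R u, 0) \<in> closure (K \<union> uminus ` K)" using U(4) uC(2) by blast
    hence "(u, 0) \<in> closure (K \<union> uminus ` K)"
      using sg(1) symcl[of "(\<sigma> *\<^sub>R u, 0)"] by auto
    hence "(u, 0) \<in> closure K \<or> (u, 0) \<in> closure (uminus ` K)" by (simp add: closure_Un)
    moreover have "(u, 0) \<notin> closure (uminus ` K)"
    proof
      assume "(u, 0) \<in> closure (uminus ` K)"
      hence "-(u, 0) \<in> ((*\<^sub>R) (-1)) ` closure (uminus ` K)" by force
      also have "\<dots> = closure (((*\<^sub>R) (-1)) ` (uminus ` K))" by (rule closure_scaleR)
      also have "((*\<^sub>R) (-1)) ` (uminus ` K) = K" by (force simp: image_comp o_def)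
      finally have "(-u, 0) \<in> closure K" by simp
      hence "(-u, 0) \<in> closure (C1 \<times> C2)" using closure_mono[OF KC] by blast
      hence "-u \<in> closure C1" by (simp add: closure_Times)
      moreover have "u \<in> closure C1" using uC closure_subset by blast
      ultimately have "u = 0" using pcc_noline[OF C1] by blast
      thus False using uC(1) pcc_zero_notin[OF C1] by simp
    qed
    ultimately show ?thesis by blast
  qed
  have "\<sigma> *\<^sub>R u0 \<in> U2" using memU2 sg(2) u0 ss by simp
  then obtain \<eta> where eta: "\<eta> > 0" "ball (\<sigma> *\<^sub>R u0) \<eta> \<subseteq> U2" using oU2 open_contains_ball by blast
  define u1 where "u1 = \<sigma> *\<^sub>R u0"
  obtain p where p: "p \<in> interior K" using iK by blast
  define t where "t = \<eta> / (2 * (norm p + 1))"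
  have np: "2 * (norm p + 1) > 0" by (smt (verit) norm_ge_zero)
  have t: "t > 0" using eta np by (simp add: t_def)
  have tp: "norm (t *\<^sub>R p) < \<eta> / 2"
  proof -
    have "norm (t *\<^sub>R p) = t * norm p" using t by simp
    also have "\<dots> < t * (norm p + 1)" using t by simp
    also have "\<dots> = \<eta> / 2" using np by (simp add: t_def field_simps)
    finally show ?thesis .
  qed
  have "u1 \<in> U2" using eta centre_in_ball unfolding u1_def by blast
  hence "(u1, 0) \<in> closure K" by (rule inK)
  moreover have "t *\<^sub>R p \<in> interior K" by (rule interior_pos_scale[OF cone p t])
  ultimately have q: "(u1, 0) + t *\<^sub>R p \<in> interior K" by (rule closure_plus_interior[OF cone cv])
  define q where "q = (u1, 0) + t *\<^sub>R p"
  obtain \<rho>1 where r1: "\<rho>1 > 0" "ball q \<rho>1 \<subseteq> interior K"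
    using q open_interior open_contains_ball unfolding q_def by blast
  define \<rho> where "\<rho> = min \<rho>1 (\<eta>/2)"
  have "\<forall>b \<in> ball q \<rho>. b \<in> interior K \<and> (fst b, 0) \<in> closure K"
  proof
    fix b assume b: "b \<in> ball q \<rho>"
    hence "b \<in> interior K" using r1 by (auto simp: \<rho>_def)
    moreover have "fst b \<in> U2"
    proof -
      have "norm (fst b - fst q) \<le> norm (b - q)"
        by (metis fst_diff norm_fst_le prod.collapse)
      also have "\<dots> < \<eta>/2" using b by (simp add: \<rho>_def dist_norm norm_minus_commute)
      finally have h1: "norm (fst b - fst q) < \<eta>/2" .
      have "norm (fst q - u1) = norm (fst (t *\<^sub>R p))" by (simp add: q_def)
      also have "\<dots> \<le> norm (t *\<^sub>R p)" by (metis norm_fst_le prod.collapse)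
      finally have h2: "norm (fst q - u1) < \<eta>/2" using tp by simp
      have "norm (fst b - u1) \<le> norm (fst b - fst q) + norm (fst q - u1)"
        by (rule order_trans[OF _ norm_triangle_ineq]) simp
      hence "dist u1 (fst b) < \<eta>" using h1 h2 by (simp add: dist_norm norm_minus_commute)
      thus ?thesis using eta(2) by (auto simp: u1_def)
    qed
    ultimately show "b \<in> interior K \<and> (fst b, 0) \<in> closure K" using inK by blast
  qed
  thus ?thesis using r1 eta by (intro exI[of _ q] exI[of _ \<rho>]) (simp add: \<rho>_def)
qed



lemma multiples_top:
  fixes x :: ennreal
  assumes m: "m > 0" and le: "\<And>N::nat. of_nat N * ennreal m \<le> x"
  shows "x = top"
proof (rule ccontr)
  assume "x \<noteq> top"
  then obtain s where s: "x = ennreal s" "s \<ge> 0" by (cases x) auto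
  define N where "N = nat \<lceil>s / m\<rceil> + 1"
  have "s / m < real N" unfolding N_def by linarith
  hence lt: "s < real N * m" using m by (simp add: field_simps)
  have "of_nat N * ennreal m = ennreal (real N * m)"
    using m by (simp add: ennreal_of_nat_eq_real_of_nat ennreal_mult)
  hence "ennreal (real N * m) \<le> ennreal s" using le[of N] s by simp
  hence "real N * m \<le> s" using s by (simp add: ennreal_le_iff)
  thus False using lt by simp
qed

lemma sum_le_single:
  fixes f :: ennreal and N :: nat
  assumes "\<And>k j. k < N \<Longrightarrow> j < N \<Longrightarrow> k \<noteq> j \<Longrightarrow> \<not> (P k \<and> P j)"
  shows "(\<Sum>k<N. if P k then f else 0) \<le> f"
proof (cases "\<exists>k0<N. P k0")
  case True
  then obtain k0 where k0: "k0 < N" "P k0" by blast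
  have "(\<Sum>k<N. if P k then f else 0) = (\<Sum>k<N. if k = k0 then f else 0)"
    using assms k0 by (intro sum.cong) auto
  also have "\<dots> = f" using k0 by (subst sum.delta) auto
  finally show ?thesis by simp
next
  case False
  hence "(\<Sum>k<N. if P k then f else 0) = 0" by (intro sum.neutral) auto
  thus ?thesis by simp
qed



theorem lemma5p1:
  fixes C1 :: "'a::euclidean_space set" and C2 :: "'b::euclidean_space set"
    and K :: "('a \<times> 'b) set"
  assumes "proper_convex_cone C1" and "proper_convex_cone C2"
    and "K \<subseteq> join_cone C1 C2"
    and "\<forall>x\<in>K. \<forall>t>0. t *\<^sub>R x \<in> K"
    and "convex K"
    and "interior K \<noteq> {}"
    and "\<exists>U. open U \<and> U \<noteq> {} \<and> U \<subseteq> proj_lift C1 \<and>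
           (\<forall>u\<in>U. (u, 0) \<in> closure (proj_lift K))"
  shows "busemann (join_cone C1 C2) K = \<infinity>"
proof -
  note C1 = assms(1) and C2 = assms(2) and cone = assms(4) and cv = assms(5)
  define C where "C = C1 \<times> C2"
  have JC: "join_cone C1 C2 = C" by (simp add: join_cone_eq C_def)
  have KC: "K \<subseteq> C" using assms(3) JC by simp
  have oC: "open C" using pcc_D(1)[OF C1] pcc_D(1)[OF C2] by (simp add: C_def open_Times)
  obtain w1 \<epsilon>1 where w1: "\<epsilon>1 > 0" "\<forall>v\<in>C1. w1 \<bullet> v \<ge> \<epsilon>1 * norm v" using pcc_dual[OF C1] by blast
  obtain w2 \<epsilon>2 where w2: "\<epsilon>2 > 0" "\<forall>v\<in>C2. w2 \<bullet> v \<ge> \<epsilon>2 * norm v" using pcc_dual[OF C2] by blast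
  have p1: "\<forall>v\<in>C1. w1 \<bullet> v > 0"
  proof
    fix v assume v: "v \<in> C1"
    hence "v \<noteq> 0" using pcc_zero_notin[OF C1] by blast
    hence "\<epsilon>1 * norm v > 0" using w1(1) by simp
    thus "w1 \<bullet> v > 0" using w1(2) v by (meson less_le_trans)
  qed
  have p2: "\<forall>v\<in>C2. w2 \<bullet> v > 0"
  proof
    fix v assume v: "v \<in> C2"
    hence "v \<noteq> 0" using pcc_zero_notin[OF C2] by blast
    hence "\<epsilon>2 * norm v > 0" using w2(1) by simp
    thus "w2 \<bullet> v > 0" using w2(2) v by (meson less_le_trans)
  qed
  define w0 where "w0 = (w1, w2)"
  define \<epsilon> where "\<epsilon> = min \<epsilon>1 \<epsilon>2"
  have eps: "\<epsilon> > 0" using w1 w2 by (simp add: \<epsilon>_def)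
  have posC: "\<forall>v\<in>C. w0 \<bullet> v \<ge> \<epsilon> * norm v"
  proof
    fix v assume v: "v \<in> C"
    obtain a b where ab: "v = (a, b)" by (cases v)
    have a: "a \<in> C1" and b: "b \<in> C2" using v ab by (auto simp: C_def)
    have "\<epsilon> * norm v \<le> \<epsilon> * (norm a + norm b)"
      using eps ab norm_Pair_le by (simp add: mult_left_mono)
    also have "\<dots> = \<epsilon> * norm a + \<epsilon> * norm b" by (simp add: algebra_simps)
    also have "\<dots> \<le> \<epsilon>1 * norm a + \<epsilon>2 * norm b"
      by (intro add_mono mult_right_mono) (auto simp: \<epsilon>_def)
    also have "\<dots> \<le> w1 \<bullet> a + w2 \<bullet> b" using w1(2) w2(2) a b by (intro add_mono) auto
    also have "\<dots> = w0 \<bullet> v" by (simp add: w0_def ab)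
    finally show "w0 \<bullet> v \<ge> \<epsilon> * norm v" .
  qed
  have zC: "0 \<notin> C" using pcc_zero_notin[OF C1] by (auto simp: C_def zero_prod_def)
  have pos0: "\<forall>v\<in>C. w0 \<bullet> v > 0"
  proof
    fix v assume v: "v \<in> C"
    hence "v \<noteq> 0" using zC by blast
    hence "\<epsilon> * norm v > 0" using eps by simp
    thus "w0 \<bullet> v > 0" using posC v by (meson less_le_trans)
  qed
  obtain q \<rho>0 where q: "\<rho>0 > 0" "\<forall>b \<in> ball q \<rho>0. b \<in> interior K \<and> (fst b, 0) \<in> closure K"
    using get_q[OF C1 C2 assms(3)[unfolded join_cone_eq] assms(4-7)] by blast
  have qK: "q \<in> interior K" using q by simp
  have qC: "q \<in> C" using qK interior_subset KC by blast
  have w0ne: "w0 \<noteq> 0" using pos0 qC by fastforce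
  define a1 where "a1 = w1 \<bullet> fst q"
  define a2 where "a2 = w2 \<bullet> snd q"
  have a1: "a1 > 0" using p1 qC by (auto simp: a1_def C_def mem_Times_iff)
  have a2: "a2 > 0" using p2 qC by (auto simp: a2_def C_def mem_Times_iff)
  define mm where "mm = min a1 a2 / 2"
  define Mx where "Mx = max a1 a2 + mm"
  have mm: "mm > 0" using a1 a2 by (simp add: mm_def)
  have Mxmm: "Mx \<ge> mm" using a1 a2 by (simp add: Mx_def)
  define \<rho> where "\<rho> = min \<rho>0 (min a1 a2 / (2 * (norm w0 + 1)))"
  have nw1: "2 * (norm w0 + 1) > 0" by (smt (verit) norm_ge_zero)
  have rho: "\<rho> > 0" using q(1) a1 a2 nw1 by (simp add: \<rho>_def)
  have ballK: "\<forall>b \<in> ball q \<rho>. b \<in> interior K \<and> (fst b, 0) \<in> closure K"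
    using q(2) by (auto simp: \<rho>_def)
  have ballC: "b \<in> C" if "b \<in> ball q \<rho>" for b using ballK that interior_subset KC by blast
  have nw: "norm w1 \<le> norm w0" "norm w2 \<le> norm w0" unfolding w0_def by (rule norm_fst_le, rule norm_snd_le)
  have nfs: "norm (fst v) \<le> norm v" "norm (snd v) \<le> norm v" for v :: "'a \<times> 'b"
    by (metis norm_fst_le prod.collapse, metis norm_snd_le prod.collapse)
  have bnd: "mm \<le> w1 \<bullet> fst b \<and> w1 \<bullet> fst b \<le> Mx \<and> mm \<le> w2 \<bullet> snd b \<and> w2 \<bullet> snd b \<le> Mx"
    if b: "b \<in> ball q \<rho>" for b
  proof -
    have nbq: "norm (b - q) \<le> min a1 a2 / (2 * (norm w0 + 1))"
      using b by (simp add: \<rho>_def dist_norm norm_minus_commute)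
    have "norm w0 * norm (b - q) \<le> (norm w0 + 1) * (min a1 a2 / (2 * (norm w0 + 1)))"
      using nbq by (intro mult_mono) auto
    also have "\<dots> = min a1 a2 / 2" using nw1 by (simp add: field_simps)
    finally have key: "norm w0 * norm (b - q) \<le> mm" by (simp add: mm_def)
    have "\<bar>w1 \<bullet> fst b - a1\<bar> = \<bar>w1 \<bullet> fst (b - q)\<bar>" by (simp add: a1_def inner_diff_right)
    also have "\<dots> \<le> norm w1 * norm (fst (b - q))" by (rule Cauchy_Schwarz_ineq2)
    also have "\<dots> \<le> norm w0 * norm (b - q)"
      by (rule mult_mono[OF nw(1) nfs(1)[of "b - q"]]) auto
    finally have e1: "\<bar>w1 \<bullet> fst b - a1\<bar> \<le> mm" using key by linarith
    have "\<bar>w2 \<bullet> snd b - a2\<bar> = \<bar>w2 \<bullet> snd (b - q)\<bar>" by (simp add: a2_def inner_diff_right)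
    also have "\<dots> \<le> norm w2 * norm (snd (b - q))" by (rule Cauchy_Schwarz_ineq2)
    also have "\<dots> \<le> norm w0 * norm (b - q)"
      by (rule mult_mono[OF nw(2) nfs(2)[of "b - q"]]) auto
    finally have e2: "\<bar>w2 \<bullet> snd b - a2\<bar> \<le> mm" using key by linarith
    have "mm \<le> min a1 a2 - mm" by (simp add: mm_def)
    thus ?thesis using e1 e2 by (auto simp: Mx_def abs_le_iff)
  qed
  define \<Lambda> where "\<Lambda> = 3 * (Mx / mm)^2"
  have Lam1: "\<Lambda> \<ge> 1"
  proof -
    have "Mx / mm \<ge> 1" using Mxmm mm by simp
    hence "(Mx / mm)^2 \<ge> 1" by (simp add: one_le_power)
    thus ?thesis by (simp add: \<Lambda>_def)
  qed
  have far: "hilbert_dist C (gmap l x) (gmap \<mu> y) > 1/2"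
    if x: "x \<in> ball q \<rho>" and y: "y \<in> ball q \<rho>" and mu: "\<mu> > 0" and l: "l \<ge> \<Lambda> * \<mu>" for x y l \<mu>
  proof -
    have l0: "l > 0" using Lam1 mu l by (smt (verit) mult_pos_pos)
    have X: "gmap l x \<in> C1 \<times> C2" using gmap_C[OF pcc_cone[OF C1] l0, of x C2] ballC[OF x] unfolding C_def by blast
    have Y: "gmap \<mu> y \<in> C1 \<times> C2" using gmap_C[OF pcc_cone[OF C1] mu, of y C2] ballC[OF y] unfolding C_def by blast
    have bx: "mm \<le> w1 \<bullet> fst x" "w2 \<bullet> snd x \<le> Mx" using bnd[OF x] by auto
    have by': "mm \<le> w2 \<bullet> snd y" "w1 \<bullet> fst y \<le> Mx" using bnd[OF y] by auto
    have "3 * ((w2 \<bullet> snd (gmap l x)) * (w1 \<bullet> fst (gmap \<mu> y)))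
        = 3 * \<mu> * ((w2 \<bullet> snd x) * (w1 \<bullet> fst y))" by (simp add: gmap_def)
    also have "\<dots> \<le> 3 * \<mu> * (Mx * Mx)"
      using bx by' mm mu p1 p2 ballC[OF x] ballC[OF y]
      by (intro mult_left_mono mult_mono) (auto simp: C_def mem_Times_iff less_imp_le)
    also have "\<dots> = \<Lambda> * \<mu> * (mm * mm)" using mm by (simp add: \<Lambda>_def power2_eq_square field_simps)
    also have "\<dots> \<le> l * (mm * mm)" using l mm by (intro mult_right_mono) auto
    also have "\<dots> \<le> l * ((w2 \<bullet> snd y) * (w1 \<bullet> fst x))"
      using bx by' mm l0 by (intro mult_left_mono mult_mono) auto
    also have "\<dots> = (w2 \<bullet> snd (gmap \<mu> y)) * (w1 \<bullet> fst (gmap l x))" by (simp add: gmap_def)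
    finally have rat: "(w2 \<bullet> snd (gmap \<mu> y)) * (w1 \<bullet> fst (gmap l x)) \<ge>
        3 * ((w2 \<bullet> snd (gmap l x)) * (w1 \<bullet> fst (gmap \<mu> y)))" .
    have oC': "open (C1 \<times> C2)" using oC by (simp add: C_def)
    show ?thesis using far_dist[OF oC' p1 p2 X Y rat] by (simp add: C_def)
  qed
  define c0 where "c0 = w0 \<bullet> q"
  define R where "R = norm q + \<rho>"
  define \<kappa> where "\<kappa> = (\<epsilon>/2) / (2 * (c0 + (\<epsilon>/2) * R))"
  have c0: "c0 > 0" using pos0 qC by (simp add: c0_def)
  have kap: "\<kappa> > 0" using c0 eps rho unfolding \<kappa>_def R_def
    by (intro divide_pos_pos) (auto intro!: add_pos_nonneg)
  define Bp where "Bp = {x \<in> ball q \<rho>. w0 \<bullet> x = w0 \<bullet> q}"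
  have loc: "\<kappa> * norm (x - y) \<le> hilbert_dist C x y" if x: "x \<in> Bp" and y: "y \<in> Bp" for x y
  proof -
    have "norm y \<le> R"
    proof -
      have "norm y \<le> norm q + norm (y - q)" by (metis norm_triangle_sub add.commute)
      also have "\<dots> \<le> norm q + \<rho>" using y by (simp add: Bp_def dist_norm norm_minus_commute less_imp_le)
      finally show ?thesis by (simp add: R_def)
    qed
    thus ?thesis unfolding \<kappa>_def
      using local_dist[OF oC posC eps zC, of x y c0 R] x y ballC by (auto simp: Bp_def c0_def)
  qed
  have da: "0 < DIM('a)" by (rule DIM_positive)
  have db: "0 < DIM('b)" by (rule DIM_positive)
  have dimge: "DIM('a \<times> 'b) \<ge> 2" unfolding DIM_prod using da db by linarith
  have half: "(0::real) \<le> 1/2" by simp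
  obtain m where m: "m > 0" and core0: "\<forall>(V :: nat \<Rightarrow> ('a \<times> 'b) set) (D :: nat \<Rightarrow> real).
     Bp \<subseteq> (\<Union>i. V i) \<longrightarrow> (\<forall>i. 0 \<le> D i \<and> D i \<le> 1/2) \<longrightarrow>
     (\<forall>i. \<forall>x\<in>V i. \<forall>y\<in>V i. \<kappa> * norm (x - y) \<le> D i) \<longrightarrow>
     ennreal m \<le> (\<Sum>i. if V i = {} then 0
        else ennreal (unit_ball_vol (real (DIM('a \<times> 'b) - 1)) * (D i / 2) ^ (DIM('a \<times> 'b) - 1)))"
    using core_measure[OF dimge w0ne rho kap half, where q=q] unfolding Bp_def by blast
  note core = core0[rule_format]
  define d where "d = DIM('a \<times> 'b) - 1"
  define S where "S = {U :: nat \<Rightarrow> ('a \<times> 'b) set. K \<subseteq> (\<Union>i. U i) \<and>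
      (\<forall>i. U i \<subseteq> C \<and> (\<forall>x\<in>U i. \<forall>y\<in>U i. hilbert_dist C x y \<le> 1/2))}"
  have allTop: "(\<Sum>i. ennreal (unit_ball_vol (real d) * (set_diam (hilbert_dist C) (U i) / 2) ^ d)) = top"
    if U: "U \<in> S" for U
  proof -
    have cov: "K \<subseteq> (\<Union>i. U i)" and hU: "\<And>i x y. x \<in> U i \<Longrightarrow> y \<in> U i \<Longrightarrow> hilbert_dist C x y \<le> 1/2"
      and UC: "\<And>i. U i \<subseteq> C" using U by (auto simp: S_def)
    define D where "D i = set_diam (hilbert_dist C) (U i)" for i
    have bdd: "bdd_above {hilbert_dist C x y | x y. x \<in> U i \<and> y \<in> U i}" for i
      using hU by (intro bdd_aboveI[of _ "1/2"]) blast
    have Dle: "hilbert_dist C x y \<le> D i" if "x \<in> U i" "y \<in> U i" for i x y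
    proof -
      have ne: "U i \<noteq> {}" using that by blast
      have mem: "hilbert_dist C x y \<in> {hilbert_dist C x y | x y. x \<in> U i \<and> y \<in> U i}"
        using that by blast
      have "hilbert_dist C x y \<le> Sup {hilbert_dist C x y | x y. x \<in> U i \<and> y \<in> U i}"
        by (rule cSup_upper[OF mem bdd])
      thus ?thesis unfolding D_def set_diam_def using ne by simp
    qed
    have Drange: "0 \<le> D i \<and> D i \<le> 1/2" for i
    proof (cases "U i = {}")
      case True thus ?thesis by (simp add: D_def set_diam_def)
    next
      case False
      then obtain x where x: "x \<in> U i" by blast
      have "0 \<le> hilbert_dist C x x" using hilbert_dist_self_nonneg[OF oC _ pos0] x UC by blast
      also have "\<dots> \<le> D i" using Dle x by blast
      finally have "0 \<le> D i" .
      moreover have "Sup {hilbert_dist C x y | x y. x \<in> U i \<and> y \<in> U i} \<le> 1/2"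
        by (rule cSup_least) (use x hU in blast)+
      hence "D i \<le> 1/2" unfolding D_def set_diam_def using False by simp
      ultimately show ?thesis by simp
    qed
    define V where "V k i = {x \<in> Bp. gmap (\<Lambda>^k) x \<in> U i}" for k i
    have Lpos: "\<Lambda>^k \<ge> 1" for k :: nat using Lam1 by (simp add: one_le_power)
    have Vcov: "Bp \<subseteq> (\<Union>i. V k i)" for k
    proof
      fix x assume x: "x \<in> Bp"
      hence "x \<in> ball q \<rho>" by (simp add: Bp_def)
      hence "gmap (\<Lambda>^k) x \<in> interior K" using gmap_good[OF cone cv _ _ Lpos[of k]] ballK by blast
      hence "gmap (\<Lambda>^k) x \<in> K" using interior_subset by blast
      then obtain i where "gmap (\<Lambda>^k) x \<in> U i" using cov by blast
      thus "x \<in> (\<Union>i. V k i)" using x by (auto simp: V_def)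
    qed
    have Vdist: "\<kappa> * norm (x - y) \<le> D i" if "x \<in> V k i" "y \<in> V k i" for k i x y
    proof -
      have xy: "x \<in> Bp" "y \<in> Bp" "gmap (\<Lambda>^k) x \<in> U i" "gmap (\<Lambda>^k) y \<in> U i" using that by (auto simp: V_def)
      have l0: "\<Lambda>^k > 0" using Lpos[of k] by linarith
      have "hilbert_dist C (gmap (\<Lambda>^k) x) (gmap (\<Lambda>^k) y) = hilbert_dist C x y"
        unfolding C_def by (rule hilbert_dist_linear[OF gmap_linear gmap_C[OF pcc_cone[OF C1] l0]])
      hence "hilbert_dist C x y \<le> D i" using Dle[OF xy(3,4)] by simp
      thus ?thesis using loc[OF xy(1,2)] by linarith
    qed
    define f where "f i = ennreal (unit_ball_vol (real d) * (D i / 2) ^ d)" for i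
    have mk: "ennreal m \<le> (\<Sum>i. if V k i = {} then 0 else f i)" for k
    proof -
      have "ennreal m \<le> (\<Sum>i. if V k i = {} then 0
          else ennreal (unit_ball_vol (real (DIM('a \<times> 'b) - 1)) * (D i / 2) ^ (DIM('a \<times> 'b) - 1)))"
        by (rule core[OF Vcov[of k]]) (use Drange Vdist in blast)+
      thus ?thesis unfolding f_def d_def .
    qed
    have disj: "\<not> (V k i \<noteq> {} \<and> V j i \<noteq> {})" if kj: "k \<noteq> j" for k j i
    proof
      assume "V k i \<noteq> {} \<and> V j i \<noteq> {}"
      then obtain x y where x: "x \<in> V k i" and y: "y \<in> V j i" by blast
      have xb: "x \<in> ball q \<rho>" "gmap (\<Lambda>^k) x \<in> U i" using x by (auto simp: V_def Bp_def)
      have yb: "y \<in> ball q \<rho>" "gmap (\<Lambda>^j) y \<in> U i" using y by (auto simp: V_def Bp_def)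
      have pw: "\<Lambda>^a \<ge> \<Lambda> * \<Lambda>^b" if ab: "b < a" for a b :: nat
      proof -
        have "\<Lambda>^a = \<Lambda>^(a - b) * \<Lambda>^b" using ab by (simp add: power_add[symmetric])
        moreover have "\<Lambda>^1 \<le> \<Lambda>^(a-b)" using ab Lam1 by (intro power_increasing) auto
        ultimately show ?thesis using Lpos[of b] by (simp add: mult_right_mono)
      qed
      show False
      proof (cases "j < k")
        case True
        have "hilbert_dist C (gmap (\<Lambda>^k) x) (gmap (\<Lambda>^j) y) > 1/2"
          using far[OF xb(1) yb(1) _ pw[OF True]] Lpos[of j] by simp
        thus False using hU[OF xb(2) yb(2)] by linarith
      next
        case False
        hence kj': "k < j" using kj by simp
        have "hilbert_dist C (gmap (\<Lambda>^j) y) (gmap (\<Lambda>^k) x) > 1/2"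
          using far[OF yb(1) xb(1) _ pw[OF kj']] Lpos[of k] by simp
        thus False using hU[OF yb(2) xb(2)] by linarith
      qed
    qed
    have Nle: "of_nat N * ennreal m \<le> (\<Sum>i. f i)" for N :: nat
    proof -
      have "of_nat N * ennreal m = (\<Sum>k<N. ennreal m)" by simp
      also have "\<dots> \<le> (\<Sum>k<N. \<Sum>i. if V k i = {} then 0 else f i)" by (intro sum_mono mk)
      also have "\<dots> = (\<Sum>i. \<Sum>k<N. if V k i = {} then 0 else f i)" by (rule suminf_sum[OF summableI, symmetric])
      also have "\<dots> \<le> (\<Sum>i. f i)"
      proof (intro suminf_le summableI)
        fix i
        have "(\<Sum>k<N. if V k i = {} then 0 else f i) = (\<Sum>k<N. if V k i \<noteq> {} then f i else 0)"
          by (intro sum.cong) auto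
        also have "\<dots> \<le> f i" by (rule sum_le_single) (use disj in blast)
        finally show "(\<Sum>k<N. if V k i = {} then 0 else f i) \<le> f i" .
      qed
      finally show ?thesis .
    qed
    have "(\<Sum>i. f i) = top" by (rule multiples_top[OF m Nle])
    thus ?thesis by (simp add: f_def D_def)
  qed
  have "top \<le> (INF U\<in>S. \<Sum>i. ennreal (unit_ball_vol (real d) * (set_diam (hilbert_dist C) (U i) / 2) ^ d))"
    by (rule INF_greatest) (simp add: allTop)
  hence "top \<le> hausdorff_measure d C (hilbert_dist C) K"
    unfolding hausdorff_measure_def S_def by (intro SUP_upper2[where i="1/2"]) auto
  thus ?thesis unfolding busemann_def JC d_def by (simp add: top_unique)
qed


end
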